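(* Let $R=\bigoplus_{s\in S}R_s$ be an epsilon-strongly graded $S$-graded ring inducing $S$. Then $R$ is graded von Neumann regular if and only if $R_e$ is a von Neumann regular ring for every idempotent $e\in S$.
   Context: Rings are associative, not necessarily unital. $S$-graded ring inducing $S$: $S$ a partial groupoid, $R=\bigoplus_{s\in S}R_s$, $R_sR_t\subseteq R_{st}$ when $st$ defined, $R_sR_t\ne0$ implies $st$ defined. Convention: $0\in S$, $R_0=0$, $S\setminus\{0\}=\{s:R_s\ne0\}$, undefined products set to $0$, $0$ absorbing. $H_R=\bigcup_sR_s$. $S$ cancellative: $0\ne su=tu$ or $0\ne us=ut$ implies $s=t$. (LRI): for every $s\in S$ there exist $s^{-1}\in S$ and idempotents $e,f$ with $es=sf=s$, $fs^{-1}=s^{-1}e=s^{-1}$, $ss^{-1}=e$, $s^{-1}s=f$. $R_sR_t$ denotes the additive subgroup generated by products. $R$ is epsilon-strongly graded if $S$ is cancellative, satisfies (LRI), and for every $s\in S$ there exists $\epsilon(s)\in R_sR_{s^{-1}}$ such that $\epsilon(s)x=x=x\epsilon(s^{-1})$ for every $x\in R_s$. $R$ is graded von Neumann regular if $x\in xRx$ for all $x\in H_R$. *)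

theory Defs
  imports Main
begin

text \<open>The ring R is the whole type 'a (class ring: associative, not
necessarily unital). The partial groupoid S is the type 's together with a
total multiplication mul in which undefined products are sent to the distinguished
absorbing element z (the "0" of S).\<close>

definition add_span :: "'a::ab_group_add set \<Rightarrow> 'a set" where
  "add_span X = \<Inter>{G. X \<subseteq> G \<and> 0 \<in> G \<and> (\<forall>a\<in>G. \<forall>b\<in>G. a + b \<in> G) \<and> (\<forall>a\<in>G. - a \<in> G)}"

definition setprod :: "'a::ring set \<Rightarrow> 'a set \<Rightarrow> 'a set" where
  "setprod A B = add_span {a * b | a b. a \<in> A \<and> b \<in> B}"

definition additive_subgroup :: "'a::ab_group_add set \<Rightarrow> bool" where
  "additive_subgroup G \<longleftrightarrow> 0 \<in> G \<and> (\<forall>a\<in>G. \<forall>b\<in>G. a + b \<in> G) \<and> (\<forall>a\<in>G. - a \<in> G)"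

text \<open>R = direct sum of the R_s, graded over the partial groupoid (S, mul, z),
inducing S: R_z = 0, R_s <> 0 for s <> z, z absorbing, R_s R_t in R_{st}
(which for st undefined, i.e. st = z, says R_s R_t = 0).\<close>
definition graded_inducing ::
  "('s \<Rightarrow> 's \<Rightarrow> 's) \<Rightarrow> 's \<Rightarrow> ('s \<Rightarrow> 'a::ring set) \<Rightarrow> bool" where
  "graded_inducing mul z Rg \<longleftrightarrow>
     (\<forall>s. additive_subgroup (Rg s)) \<and>
     (\<forall>x. \<exists>f. finite {s. f s \<noteq> 0} \<and> (\<forall>s. f s \<in> Rg s) \<and> x = sum f {s. f s \<noteq> 0}) \<and>
     (\<forall>f. finite {s. f s \<noteq> 0} \<and> (\<forall>s. f s \<in> Rg s) \<and> sum f {s. f s \<noteq> 0} = 0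
          \<longrightarrow> (\<forall>s. f s = 0)) \<and>
     (\<forall>s t x y. x \<in> Rg s \<longrightarrow> y \<in> Rg t \<longrightarrow> x * y \<in> Rg (mul s t)) \<and>
     (\<forall>s. mul z s = z \<and> mul s z = z) \<and>
     Rg z = {0} \<and>
     (\<forall>s. s \<noteq> z \<longrightarrow> Rg s \<noteq> {0})"

definition cancellative :: "('s \<Rightarrow> 's \<Rightarrow> 's) \<Rightarrow> 's \<Rightarrow> bool" where
  "cancellative mul z \<longleftrightarrow>
     (\<forall>s t u. (mul s u \<noteq> z \<and> mul s u = mul t u) \<longrightarrow> s = t) \<and>
     (\<forall>s t u. (mul u s \<noteq> z \<and> mul u s = mul u t) \<longrightarrow> s = t)"

definition idem :: "('s \<Rightarrow> 's \<Rightarrow> 's) \<Rightarrow> 's \<Rightarrow> bool" where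
  "idem mul e \<longleftrightarrow> mul e e = e"

definition LRI_at :: "('s \<Rightarrow> 's \<Rightarrow> 's) \<Rightarrow> 's \<Rightarrow> 's \<Rightarrow> bool" where
  "LRI_at mul s si \<longleftrightarrow> (\<exists>e f. idem mul e \<and> idem mul f \<and>
      mul e s = s \<and> mul s f = s \<and> mul f si = si \<and> mul si e = si \<and>
      mul s si = e \<and> mul si s = f)"

definition epsilon_strongly_graded ::
  "('s \<Rightarrow> 's \<Rightarrow> 's) \<Rightarrow> 's \<Rightarrow> ('s \<Rightarrow> 'a::ring set) \<Rightarrow> bool" where
  "epsilon_strongly_graded mul z Rg \<longleftrightarrow>
     cancellative mul z \<and>
     (\<exists>inv eps. (\<forall>s. LRI_at mul s (inv s)) \<and>
        (\<forall>s. eps s \<in> setprod (Rg s) (Rg (inv s)) \<and>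
             (\<forall>x\<in>Rg s. eps s * x = x \<and> x * eps (inv s) = x)))"

definition homogeneous :: "('s \<Rightarrow> 'a set) \<Rightarrow> 'a set" where
  "homogeneous Rg = (\<Union>s. Rg s)"

definition graded_vNr :: "('s \<Rightarrow> 'a::ring set) \<Rightarrow> bool" where
  "graded_vNr Rg \<longleftrightarrow> (\<forall>x\<in>homogeneous Rg. \<exists>y. x = x * y * x)"

definition vNr_ring :: "'a::ring set \<Rightarrow> bool" where
  "vNr_ring A \<longleftrightarrow> (\<forall>x\<in>A. \<exists>y\<in>A. x = x * y * x)"

end

theory Submission
  imports Defs
begin

lemma key_list:
  fixes x :: "'a::ring"
  assumes Y: "additive_subgroup Y" and xY: "\<forall>y\<in>Y. x*y \<in> A"
    and YA: "\<forall>y\<in>Y. \<forall>a\<in>A. y*a \<in> Y" and reg: "vNr_ring A"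
  shows "set cs \<subseteq> Y \<Longrightarrow> \<exists>y0\<in>Y. \<forall>c\<in>set cs. x*y0*(x*c) = x*c"
proof (induction cs)
  case Nil
  then show ?case using Y by (auto simp: additive_subgroup_def)
next
  case (Cons c cs)
  then obtain y0 where y0: "y0 \<in> Y" "\<forall>c\<in>set cs. x*y0*(x*c) = x*c" by auto
  have cY: "c \<in> Y" using Cons by auto
  define c' where "c' = c - y0*(x*c)"
  have "y0*(x*c) \<in> Y" using YA xY y0 cY by auto
  hence c'Y: "c' \<in> Y" using Y cY unfolding c'_def additive_subgroup_def
    by (metis diff_conv_add_uminus)
  define b where "b = x*c'"
  have bA: "b \<in> A" using xY c'Y b_def by auto
  then obtain w where w: "w \<in> A" "b = b*w*b" using reg unfolding vNr_ring_def by auto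
  define y1 where "y1 = y0 + c'*w - c'*w*(x*y0)"
  have "c'*w \<in> Y" using YA c'Y w by auto
  moreover have "c'*w*(x*y0) \<in> Y" using YA calculation xY y0 by auto
  ultimately have y1Y: "y1 \<in> Y" using Y y0 unfolding y1_def additive_subgroup_def
    by (metis diff_conv_add_uminus)
  have e1: "x*y1 = x*y0 + b*w - b*w*(x*y0)"
    unfolding y1_def b_def by (simp add: algebra_simps)
  have bdef: "b = x*c - x*y0*(x*c)" unfolding b_def c'_def by (simp add: algebra_simps)
  show ?case
  proof (intro bexI[OF _ y1Y] ballI)
    fix d assume "d \<in> set (c # cs)"
    then consider "d = c" | "d \<in> set cs" by auto
    then show "x*y1*(x*d) = x*d"
    proof cases
      case 1
      have "x*y1*(x*d) = x*y0*(x*c) + b*w*(x*c - x*y0*(x*c))"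
      proof -
        have "x*y1*(x*d) = (x*y0 + b*w - b*w*(x*y0))*(x*c)" using 1 e1 by simp
        thus ?thesis by (simp add: algebra_simps)
      qed
      also have "\<dots> = x*y0*(x*c) + b*w*b" using bdef by simp
      also have "\<dots> = x*c" using w bdef by simp
      finally show ?thesis using 1 by simp
    next
      case 2
      hence h: "x*y0*(x*d) = x*d" using y0 by auto
      have "x*y1*(x*d) = x*y0*(x*d) + b*w*(x*d) - b*w*(x*y0*(x*d))"
      proof -
        have "x*y1*(x*d) = (x*y0 + b*w - b*w*(x*y0))*(x*d)" using e1 by simp
        thus ?thesis by (simp add: algebra_simps)
      qed
      then show ?thesis using h by simp
    qed
  qed
qed

lemma span_prop:
  fixes x :: "'a::ring"
  assumes "u \<in> add_span {c*d | c d. c \<in> Y \<and> d \<in> B}"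
  shows "\<exists>cs. set cs \<subseteq> Y \<and> (\<forall>y0. (\<forall>c\<in>set cs. x*y0*(x*c) = x*c) \<longrightarrow> x*y0*(x*u) = x*u)"
proof -
  define G where "G = {u. \<exists>cs. set cs \<subseteq> Y \<and> (\<forall>y0. (\<forall>c\<in>set cs. x*y0*(x*c) = x*c) \<longrightarrow> x*y0*(x*u) = x*u)}"
  have "{c*d | c d. c \<in> Y \<and> d \<in> B} \<subseteq> G"
  proof
    fix v assume "v \<in> {c*d | c d. c \<in> Y \<and> d \<in> B}"
    then obtain c d where v: "v = c*d" "c \<in> Y" by auto
    show "v \<in> G" unfolding G_def
    proof (intro CollectI exI[of _ "[c]"] conjI allI impI)
      fix y0 assume "\<forall>c'\<in>set [c]. x*y0*(x*c') = x*c'"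
      hence "x*y0*(x*c) = x*c" by simp
      hence "x*y0*(x*c)*d = x*c*d" by simp
      thus "x*y0*(x*v) = x*v" using v by (simp add: mult.assoc)
    qed (use v in auto)
  qed
  moreover have "0 \<in> G" unfolding G_def by (intro CollectI exI[of _ "[]"]) auto
  moreover have "\<forall>a\<in>G. \<forall>b\<in>G. a + b \<in> G"
  proof (intro ballI)
    fix a b assume "a \<in> G" "b \<in> G"
    then obtain ca cb where ca: "set ca \<subseteq> Y" "\<forall>y0. (\<forall>c\<in>set ca. x*y0*(x*c) = x*c) \<longrightarrow> x*y0*(x*a) = x*a"
      and cb: "set cb \<subseteq> Y" "\<forall>y0. (\<forall>c\<in>set cb. x*y0*(x*c) = x*c) \<longrightarrow> x*y0*(x*b) = x*b"
      unfolding G_def by auto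
    show "a + b \<in> G" unfolding G_def
    proof (intro CollectI exI[of _ "ca @ cb"] conjI allI impI)
      fix y0 assume "\<forall>c\<in>set (ca @ cb). x*y0*(x*c) = x*c"
      hence "x*y0*(x*a) = x*a" "x*y0*(x*b) = x*b" using ca cb by auto
      thus "x*y0*(x*(a+b)) = x*(a+b)" by (simp add: algebra_simps)
    qed (use ca cb in auto)
  qed
  moreover have "\<forall>a\<in>G. - a \<in> G"
  proof
    fix a assume "a \<in> G"
    then obtain ca where ca: "set ca \<subseteq> Y" "\<forall>y0. (\<forall>c\<in>set ca. x*y0*(x*c) = x*c) \<longrightarrow> x*y0*(x*a) = x*a"
      unfolding G_def by auto
    show "- a \<in> G" unfolding G_def
    proof (intro CollectI exI[of _ ca] conjI allI impI)
      fix y0 assume "\<forall>c\<in>set ca. x*y0*(x*c) = x*c"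
      hence "x*y0*(x*a) = x*a" using ca by auto
      thus "x*y0*(x*(-a)) = x*(-a)" by simp
    qed (use ca in auto)
  qed
  ultimately have "add_span {c*d | c d. c \<in> Y \<and> d \<in> B} \<subseteq> G"
    unfolding add_span_def by blast
  thus ?thesis using assms unfolding G_def by auto
qed

lemma subgroup_sum:
  assumes "additive_subgroup G" "\<forall>t\<in>T. h t \<in> G"
  shows "sum h T \<in> G"
  using assms(2)
proof (induction T rule: infinite_finite_induct)
  case (infinite A) then show ?case using assms(1) by (simp add: additive_subgroup_def)
next
  case empty then show ?case using assms(1) by (simp add: additive_subgroup_def)
next
  case (insert a F) then show ?case using assms(1) by (simp add: additive_subgroup_def)
qed

lemma unique_component:
  assumes gi: "graded_inducing mul z Rg" and fin: "finite U"
    and gU: "\<forall>u\<in>U. g u \<in> Rg u" and s0: "sum g U = 0" and uU: "u \<in> U"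
  shows "g u = 0"
proof -
  define g' where "g' = (\<lambda>s. if s \<in> U then g s else 0)"
  have sub: "{s. g' s \<noteq> 0} \<subseteq> U" unfolding g'_def by auto
  hence fin': "finite {s. g' s \<noteq> 0}" using fin finite_subset by blast
  have inR: "\<forall>s. g' s \<in> Rg s" using gi gU unfolding g'_def graded_inducing_def additive_subgroup_def
    by auto
  have "sum g' {s. g' s \<noteq> 0} = sum g' U"
    by (rule sum.mono_neutral_left[OF fin sub]) auto
  also have "\<dots> = sum g U" unfolding g'_def by simp
  finally have "sum g' {s. g' s \<noteq> 0} = 0" using s0 by simp
  hence "\<forall>s. g' s = 0" using gi fin' inR unfolding graded_inducing_def by blast
  thus ?thesis using uU unfolding g'_def by metis
qed

theorem corollary4p12:
  fixes mul :: "'s \<Rightarrow> 's \<Rightarrow> 's" and z :: 's and Rg :: "'s \<Rightarrow> 'a::ring set"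
  assumes "graded_inducing mul z Rg"
    and "epsilon_strongly_graded mul z Rg"
  shows "graded_vNr Rg \<longleftrightarrow> (\<forall>e. idem mul e \<longrightarrow> vNr_ring (Rg e))"
proof
  have sg: "\<And>s. additive_subgroup (Rg s)" using assms(1) unfolding graded_inducing_def by blast
  have mulR: "\<And>s t x y. x \<in> Rg s \<Longrightarrow> y \<in> Rg t \<Longrightarrow> x * y \<in> Rg (mul s t)"
    using assms(1) unfolding graded_inducing_def by blast
  have canc: "cancellative mul z" using assms(2) unfolding epsilon_strongly_graded_def by blast
  have zabs: "\<And>s. mul z s = z" using assms(1) unfolding graded_inducing_def by blast
  have Rz: "Rg z = {0}" using assms(1) unfolding graded_inducing_def by blast
  assume gv: "graded_vNr Rg"
  show "\<forall>e. idem mul e \<longrightarrow> vNr_ring (Rg e)"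
  proof (intro allI impI)
    fix e assume ide: "idem mul e"
    show "vNr_ring (Rg e)" unfolding vNr_ring_def
    proof
      fix x assume xe: "x \<in> Rg e"
      show "\<exists>y\<in>Rg e. x = x * y * x"
      proof (cases "e = z")
        case True
        then show ?thesis using xe Rz sg[of e] by (auto simp: additive_subgroup_def)
      next
        case enz: False
        have "x \<in> homogeneous Rg" using xe unfolding homogeneous_def by auto
        then obtain y where xy: "x = x * y * x" using gv unfolding graded_vNr_def by auto
        obtain f where f: "finite {s. f s \<noteq> 0}" "\<forall>s. f s \<in> Rg s" "y = sum f {s. f s \<noteq> 0}"
          using assms(1) unfolding graded_inducing_def by blast
        define S where "S = {s. f s \<noteq> 0}"
        define h where "h = (\<lambda>t. x * f t * x)"
        define \<phi> where "\<phi> = (\<lambda>t. mul (mul e t) e)"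
        define S' where "S' = S - {e}"
        have finS: "finite S" using f S_def by simp
        have finS': "finite S'" using finS S'_def by simp
        have hR: "\<And>t. h t \<in> Rg (\<phi> t)" unfolding h_def \<phi>_def using mulR xe f(2) by blast
        have phine: "\<phi> t \<noteq> e" if "t \<noteq> e" for t
        proof
          assume a: "\<phi> t = e"
          have ee: "mul e e = e" using ide unfolding idem_def by simp
          have "mul e t = e"
            using canc a ee enz unfolding cancellative_def \<phi>_def by metis
          hence "t = e" using canc ee enz unfolding cancellative_def by metis
          thus False using that by simp
        qed
        have xsum: "x = sum h S"
          using xy f(3) unfolding S_def h_def by (simp add: sum_distrib_left sum_distrib_right)
        have hS: "sum h S = h e + sum h S'"
        proof (cases "e \<in> S")
          case True then show ?thesis unfolding S'_def using finS by (simp add: sum.remove)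
        next
          case False
          hence "f e = 0" unfolding S_def by simp
          then show ?thesis using False unfolding S'_def h_def by simp
        qed
        define g where "g = (\<lambda>u. if u = e then h e - x else sum h {t\<in>S'. \<phi> t = u})"
        define U where "U = insert e (\<phi> ` S')"
        have eni: "e \<notin> \<phi> ` S'" using phine unfolding S'_def by auto
        have "sum g U = g e + sum g (\<phi> ` S')" unfolding U_def using eni finS' by simp
        also have "sum g (\<phi> ` S') = sum h S'"
        proof -
          have "sum g (\<phi> ` S') = (\<Sum>u\<in>\<phi> ` S'. sum h {t\<in>S'. \<phi> t = u})"
            by (rule sum.cong) (use eni in \<open>auto simp: g_def\<close>)
          also have "\<dots> = sum h S'" by (rule sum.image_gen[symmetric, OF finS'])
          finally show ?thesis .
        qed
        finally have "sum g U = 0" unfolding g_def using xsum hS by simp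
        moreover have "\<forall>u\<in>U. g u \<in> Rg u"
        proof
          fix u assume "u \<in> U"
          show "g u \<in> Rg u"
          proof (cases "u = e")
            case True
            have "\<phi> e = e" using ide unfolding idem_def \<phi>_def by simp
            hence "h e \<in> Rg e" using hR[of e] by simp
            then show ?thesis using True xe sg[of e] unfolding g_def additive_subgroup_def
              by (metis diff_conv_add_uminus)
          next
            case False
            have "sum h {t\<in>S'. \<phi> t = u} \<in> Rg u"
              by (rule subgroup_sum[OF sg]) (use hR in auto)
            then show ?thesis using False unfolding g_def by simp
          qed
        qed
        ultimately have "g e = 0"
          using unique_component[OF assms(1), of U g e] finS' unfolding U_def by auto
        hence "x = x * f e * x" unfolding g_def h_def by simp
        thus ?thesis using f(2) by blast
      qed
    qed
  qed
next
  have sg: "\<And>s. additive_subgroup (Rg s)" using assms(1) unfolding graded_inducing_def by blast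
  have mulR: "\<And>s t x y. x \<in> Rg s \<Longrightarrow> y \<in> Rg t \<Longrightarrow> x * y \<in> Rg (mul s t)"
    using assms(1) unfolding graded_inducing_def by blast
  obtain inv eps where ie: "\<forall>s. LRI_at mul s (inv s)"
    "\<forall>s. eps s \<in> setprod (Rg s) (Rg (inv s)) \<and> (\<forall>x\<in>Rg s. eps s * x = x \<and> x * eps (inv s) = x)"
    using assms(2) unfolding epsilon_strongly_graded_def by blast
  assume reg: "\<forall>e. idem mul e \<longrightarrow> vNr_ring (Rg e)"
  show "graded_vNr Rg" unfolding graded_vNr_def
  proof
    fix x assume "x \<in> homogeneous Rg"
    then obtain s where xs: "x \<in> Rg s" unfolding homogeneous_def by auto
    obtain e f where ef: "idem mul e" "mul (inv s) e = inv s" "mul s (inv s) = e"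
      using ie(1) unfolding LRI_at_def by blast
    have xY: "\<forall>y\<in>Rg (inv s). x*y \<in> Rg e" using mulR xs ef by metis
    have YA: "\<forall>y\<in>Rg (inv s). \<forall>a\<in>Rg e. y*a \<in> Rg (inv s)" using mulR ef by metis
    have ex: "x * eps (inv s) = x" using ie(2) xs by blast
    have "eps (inv s) \<in> add_span {c*d | c d. c \<in> Rg (inv s) \<and> d \<in> Rg (inv (inv s))}"
      using ie(2) unfolding setprod_def by blast
    from span_prop[OF this, of x] obtain cs where cs: "set cs \<subseteq> Rg (inv s)"
      "\<forall>y0. (\<forall>c\<in>set cs. x*y0*(x*c) = x*c) \<longrightarrow> x*y0*(x*eps (inv s)) = x*eps (inv s)" by blast
    obtain y0 where "y0 \<in> Rg (inv s)" "\<forall>c\<in>set cs. x*y0*(x*c) = x*c"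
      using key_list[OF sg xY YA reg[rule_format, OF ef(1)] cs(1)] by blast
    hence "x*y0*x = x" using cs(2) ex by metis
    thus "\<exists>y. x = x * y * x" by metis
  qed
qed

end
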